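(* Let $R=(r_{st})$ be an $n\times n$ matrix over the complex numbers ($n\ge 2$). For $1\le i,j\le n$ let $R_{ij}$ be the matrix obtained from $R$ by replacing the $(i,j)$ entry by $0$ (all other entries unchanged). Then $$(n^2-n)\,d_2(R)=\sum_{1\le i,j\le n} d_2(R_{ij}).$$
   Context: For an $n\times n$ matrix $M=(m_{ij})$ ($n\ge 2$), the second immanant is $d_2(M)=\sum_{\sigma\in S_n}\chi_2(\sigma)\prod_{s=1}^n m_{s\sigma(s)}$, where $\chi_2$ is the irreducible character of the symmetric group $S_n$ corresponding to the partition $(2,1^{n-2})$. *)

theory Defs
  imports "HOL-Analysis.Analysis"
begin

text \<open>Irreducible character of S_n for the partition (2,1^(n-2)):
  it is the sign character times the character of the standard representation
  (partition (n-1,1)), i.e. sign(sigma) * (number of fixed points - 1).\<close>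
definition chi2 :: "('n::finite \<Rightarrow> 'n) \<Rightarrow> complex" where
  "chi2 \<sigma> = of_int (sign \<sigma>) * (of_nat (card {s. \<sigma> s = s}) - 1)"

definition d2 :: "complex^'n^'n \<Rightarrow> complex" where
  "d2 M = (\<Sum>\<sigma> | \<sigma> permutes (UNIV :: 'n::finite set).
             chi2 \<sigma> * (\<Prod>s\<in>UNIV. M $ s $ \<sigma> s))"

definition zero_entry :: "complex^'n^'n \<Rightarrow> 'n \<Rightarrow> 'n \<Rightarrow> complex^'n^'n" where
  "zero_entry R i j = (\<chi> s t. if s = i \<and> t = j then 0 else R $ s $ t)"

end

theory Submission
  imports Defs
begin

lemma prod_zero_entry:
  fixes R :: "complex^'n::finite^'n"
  shows "(\<Prod>s\<in>UNIV. zero_entry R i j $ s $ \<sigma> s)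
     = (if \<sigma> i = j then 0 else (\<Prod>s\<in>UNIV. R $ s $ \<sigma> s))"
proof (cases "\<sigma> i = j")
  case True
  have "zero_entry R i j $ i $ \<sigma> i = 0" using True by (simp add: zero_entry_def)
  then have "(\<Prod>s\<in>UNIV. zero_entry R i j $ s $ \<sigma> s) = 0"
    by (intro prod_zero) auto
  then show ?thesis using True by simp
next
  case False
  have "\<And>s. zero_entry R i j $ s $ \<sigma> s = R $ s $ \<sigma> s"
    using False by (auto simp: zero_entry_def)
  then show ?thesis using False by simp
qed

lemma inner_sum:
  fixes c :: complex and k :: "'n::finite"
  shows "(\<Sum>j\<in>UNIV. if k = j then 0 else c) = (of_nat CARD('n) - 1) * c"
proof -
  have "(\<Sum>j\<in>UNIV. if k = j then 0 else c) = (\<Sum>j\<in>UNIV - {k}. c)"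
    by (simp add: sum.If_cases Diff_eq Compl_eq)
  also have "\<dots> = of_nat (CARD('n) - 1) * c" by simp
  also have "\<dots> = (of_nat CARD('n) - 1) * c"
    by (simp add: of_nat_diff Suc_leI)
  finally show ?thesis .
qed

theorem lemma3p3:
  fixes R :: "complex^'n::finite^'n"
  assumes "CARD('n) \<ge> 2"
  shows "(of_nat (CARD('n))^2 - of_nat (CARD('n))) * d2 R
         = (\<Sum>i\<in>UNIV. \<Sum>j\<in>UNIV. d2 (zero_entry R i j))"
proof -
  let ?S = "{\<sigma>. \<sigma> permutes (UNIV :: 'n set)}"
  let ?P = "\<lambda>\<sigma>. (\<Prod>s\<in>UNIV. R $ s $ \<sigma> s)"
  have "(\<Sum>i\<in>UNIV. \<Sum>j\<in>UNIV. d2 (zero_entry R i j))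
      = (\<Sum>i\<in>UNIV. \<Sum>j\<in>UNIV. \<Sum>\<sigma>\<in>?S. chi2 \<sigma> * (if \<sigma> i = j then 0 else ?P \<sigma>))"
    unfolding d2_def by (simp only: prod_zero_entry)
  also have "\<dots> = (\<Sum>\<sigma>\<in>?S. \<Sum>i\<in>UNIV. \<Sum>j\<in>UNIV. chi2 \<sigma> * (if \<sigma> i = j then 0 else ?P \<sigma>))"
  proof -
    have "\<And>i. (\<Sum>j\<in>UNIV. \<Sum>\<sigma>\<in>?S. chi2 \<sigma> * (if \<sigma> i = j then 0 else ?P \<sigma>))
       = (\<Sum>\<sigma>\<in>?S. \<Sum>j\<in>UNIV. chi2 \<sigma> * (if \<sigma> i = j then 0 else ?P \<sigma>))"
      by (rule sum.swap)
    then have "(\<Sum>i\<in>UNIV. \<Sum>j\<in>UNIV. \<Sum>\<sigma>\<in>?S. chi2 \<sigma> * (if \<sigma> i = j then 0 else ?P \<sigma>))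
       = (\<Sum>i\<in>UNIV. \<Sum>\<sigma>\<in>?S. \<Sum>j\<in>UNIV. chi2 \<sigma> * (if \<sigma> i = j then 0 else ?P \<sigma>))"
      by simp
    also have "\<dots> = (\<Sum>\<sigma>\<in>?S. \<Sum>i\<in>UNIV. \<Sum>j\<in>UNIV. chi2 \<sigma> * (if \<sigma> i = j then 0 else ?P \<sigma>))"
      by (rule sum.swap)
    finally show ?thesis .
  qed
  also have "\<dots> = (\<Sum>\<sigma>\<in>?S. of_nat CARD('n) * ((of_nat CARD('n) - 1) * (chi2 \<sigma> * ?P \<sigma>)))"
  proof (rule sum.cong[OF refl])
    fix \<sigma> :: "'n \<Rightarrow> 'n"
    have "\<And>i. (\<Sum>j\<in>UNIV. chi2 \<sigma> * (if \<sigma> i = j then 0 else ?P \<sigma>))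
        = (\<Sum>j\<in>UNIV. if \<sigma> i = j then 0 else chi2 \<sigma> * ?P \<sigma>)"
      by (rule sum.cong) auto
    then have "\<And>i. (\<Sum>j\<in>UNIV. chi2 \<sigma> * (if \<sigma> i = j then 0 else ?P \<sigma>))
        = (of_nat CARD('n) - 1) * (chi2 \<sigma> * ?P \<sigma>)"
      by (simp only: inner_sum)
    then show "(\<Sum>i\<in>UNIV. \<Sum>j\<in>UNIV. chi2 \<sigma> * (if \<sigma> i = j then 0 else ?P \<sigma>))
        = of_nat CARD('n) * ((of_nat CARD('n) - 1) * (chi2 \<sigma> * ?P \<sigma>))"
      by (simp only: sum_constant)
  qed
  also have "\<dots> = (\<Sum>\<sigma>\<in>?S. (of_nat CARD('n)^2 - of_nat CARD('n)) * (chi2 \<sigma> * ?P \<sigma>))"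
  proof (rule sum.cong[OF refl])
    fix \<sigma> :: "'n \<Rightarrow> 'n"
    show "of_nat CARD('n) * ((of_nat CARD('n) - 1) * (chi2 \<sigma> * ?P \<sigma>))
      = (of_nat CARD('n)^2 - of_nat CARD('n)) * (chi2 \<sigma> * ?P \<sigma>)"
      by (simp only: power2_eq_square right_diff_distrib mult_1_right mult_1_left mult.assoc left_diff_distrib)
  qed
  also have "\<dots> = (of_nat (CARD('n))^2 - of_nat (CARD('n))) * d2 R"
    unfolding d2_def by (rule sum_distrib_left[symmetric])
  finally show ?thesis by simp
qed

end
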